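(* Let $X$ be a regular Hausdorff space. Then $X$ is an $\aleph_k$-space if and only if $\mathcal{K}(X)$ is an $\aleph_k$-space; and $X$ is an $\overline{\aleph}_k$-space if and only if $\mathcal{K}(X)$ is an $\overline{\aleph}_k$-space.
   Context: $\mathcal{K}(X)$ is the space of nonempty compact subsets of $X$ with the Vietoris topology (base: $\langle U_1,\dots,U_k\rangle=\{K: K\subset\bigcup U_i,\ K\cap U_j\neq\emptyset\ \forall j\}$, $U_i$ open). A family $\mathcal{P}$ of subsets of $Y$ is a $k$-network if for every compact $K$ and open $U\supset K$ some finite $\mathcal{P}'\subset\mathcal{P}$ satisfies $K\subset\bigcup\mathcal{P}'\subset U$; it is compact-countable if each compact set meets only countably many members. A regular space is an $\aleph_k$-space if it has a compact-countable $k$-network, and an $\overline{\aleph}_k$-space if it has a compact-countable $k$-network consisting of closed sets. *)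

theory Defs
  imports "HOL-Analysis.Analysis"
begin

definition vietoris_basic :: "'a topology \<Rightarrow> 'a set set \<Rightarrow> 'a set set" where
  "vietoris_basic X \<U> =
     {K. K \<subseteq> topspace X \<and> compactin X K \<and> K \<noteq> {} \<and> K \<subseteq> \<Union>\<U> \<and> (\<forall>U\<in>\<U>. K \<inter> U \<noteq> {})}"

definition hyperspace :: "'a topology \<Rightarrow> 'a set topology" where
  "hyperspace X =
     subtopology
       (topology_generated_by
          {vietoris_basic X \<U> | \<U>. finite \<U> \<and> \<U> \<noteq> {} \<and> (\<forall>U\<in>\<U>. openin X U)})
       {K. K \<subseteq> topspace X \<and> compactin X K \<and> K \<noteq> {}}"

definition k_network :: "'a topology \<Rightarrow> 'a set set \<Rightarrow> bool" where
  "k_network Y \<P> \<longleftrightarrow> (\<forall>P\<in>\<P>. P \<subseteq> topspace Y) \<and>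
     (\<forall>K U. compactin Y K \<and> openin Y U \<and> K \<subseteq> U \<longrightarrow>
        (\<exists>\<P>'. \<P>' \<subseteq> \<P> \<and> finite \<P>' \<and> K \<subseteq> \<Union>\<P>' \<and> \<Union>\<P>' \<subseteq> U))"

definition compact_countable :: "'a topology \<Rightarrow> 'a set set \<Rightarrow> bool" where
  "compact_countable Y \<P> \<longleftrightarrow>
     (\<forall>K. compactin Y K \<longrightarrow> countable {P\<in>\<P>. P \<inter> K \<noteq> {}})"

definition aleph_k_space :: "'a topology \<Rightarrow> bool" where
  "aleph_k_space Y \<longleftrightarrow> regular_space Y \<and>
     (\<exists>\<P>. k_network Y \<P> \<and> compact_countable Y \<P>)"

definition closed_aleph_k_space :: "'a topology \<Rightarrow> bool" where
  "closed_aleph_k_space Y \<longleftrightarrow> regular_space Y \<and>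
     (\<exists>\<P>. k_network Y \<P> \<and> compact_countable Y \<P> \<and> (\<forall>P\<in>\<P>. closedin Y P))"

end

theory Submission
  imports Defs
begin

definition KS :: "'a topology \<Rightarrow> 'a set set" where
  "KS X = {K. K \<subseteq> topspace X \<and> compactin X K \<and> K \<noteq> {}}"

definition VB :: "'a topology \<Rightarrow> 'a set set set" where
  "VB X = {vietoris_basic X \<U> | \<U>. finite \<U> \<and> \<U> \<noteq> {} \<and> (\<forall>U\<in>\<U>. openin X U)}"

definition VT :: "'a topology \<Rightarrow> 'a set \<Rightarrow> 'a set set \<Rightarrow> 'a set set" where
  "VT X V \<V> = {L. L \<subseteq> topspace X \<and> compactin X L \<and> L \<noteq> {} \<and> L \<subseteq> V \<and> (\<forall>v\<in>\<V>. L \<inter> v \<noteq> {})}"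

lemma hyperspace_alt: "hyperspace X = subtopology (topology_generated_by (VB X)) (KS X)"
  unfolding hyperspace_def VB_def KS_def by simp

lemma VT_sub_KS: "VT X V \<V> \<subseteq> KS X"
  unfolding VT_def KS_def by auto

lemma KS_sub_VB: "KS X \<subseteq> \<Union>(VB X)"
proof
  fix K assume K: "K \<in> KS X"
  have "K \<in> vietoris_basic X {topspace X}"
    using K unfolding KS_def vietoris_basic_def by auto
  moreover have "vietoris_basic X {topspace X} \<in> VB X"
    unfolding VB_def by (rule CollectI, rule exI[of _ "{topspace X}"]) auto
  ultimately show "K \<in> \<Union>(VB X)" by blast
qed

lemma topspace_hyperspace: "topspace (hyperspace X) = KS X"
  unfolding hyperspace_alt using KS_sub_VB by auto

lemma openin_hyperspace:
  "openin (hyperspace X) W \<longleftrightarrow> (\<exists>G. generate_topology_on (VB X) G \<and> W = G \<inter> KS X)"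
  unfolding hyperspace_alt openin_subtopology openin_topology_generated_by_iff by auto

lemma VT_open:
  assumes "openin X V" "finite \<V>" "\<forall>v\<in>\<V>. openin X v"
  shows "openin (hyperspace X) (VT X V \<V>)"
proof -
  let ?U = "insert V ((\<lambda>v. V \<inter> v) ` \<V>)"
  have eq: "VT X V \<V> = vietoris_basic X ?U"
    unfolding VT_def vietoris_basic_def by (auto; blast)
  have "vietoris_basic X ?U \<in> VB X"
    unfolding VB_def using assms by (intro CollectI exI[of _ ?U]) auto
  then have "generate_topology_on (VB X) (VT X V \<V>)"
    unfolding eq by (rule generate_topology_on.Basis)
  moreover have "VT X V \<V> = VT X V \<V> \<inter> KS X" using VT_sub_KS by blast
  ultimately show ?thesis unfolding openin_hyperspace by blast
qed

lemma VT_closed: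
  assumes "closedin X C" "finite \<C>" "\<forall>c\<in>\<C>. closedin X c"
  shows "closedin (hyperspace X) (VT X C \<C>)"
proof -
  have eq: "topspace (hyperspace X) - VT X C \<C> =
     VT X (topspace X) {topspace X - C} \<union> \<Union>((\<lambda>c. VT X (topspace X - c) {}) ` \<C>)"
    unfolding topspace_hyperspace VT_def KS_def by auto
  have "openin (hyperspace X) (VT X (topspace X) {topspace X - C})"
    using assms by (intro VT_open) auto
  moreover have "openin (hyperspace X) (\<Union>((\<lambda>c. VT X (topspace X - c) {}) ` \<C>))"
    using assms by (intro openin_Union) (auto intro!: VT_open)
  ultimately have "openin (hyperspace X) (topspace (hyperspace X) - VT X C \<C>)"
    unfolding eq by blast
  then show ?thesis unfolding closedin_def topspace_hyperspace using VT_sub_KS by blast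
qed

lemma compact_subcover_fun:
  assumes "compactin T S" "\<And>x. x \<in> S \<Longrightarrow> openin T (Ob x) \<and> x \<in> Ob x"
  shows "\<exists>S0. finite S0 \<and> S0 \<subseteq> S \<and> S \<subseteq> \<Union>(Ob ` S0)"
proof -
  have all: "\<forall>U. (\<forall>x\<in>U. openin T x) \<and> S \<subseteq> \<Union>U \<longrightarrow> (\<exists>F. finite F \<and> F \<subseteq> U \<and> S \<subseteq> \<Union>F)"
    using assms(1) by (simp add: compactin_def)
  have o: "\<forall>x\<in>Ob ` S. openin T x" using assms(2) by blast
  have c: "S \<subseteq> \<Union>(Ob ` S)" using assms(2) by blast
  have "(\<forall>x\<in>Ob ` S. openin T x) \<and> S \<subseteq> \<Union>(Ob ` S) \<longrightarrow> (\<exists>F. finite F \<and> F \<subseteq> Ob ` S \<and> S \<subseteq> \<Union>F)"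
    using all by (rule spec)
  then obtain F where F: "finite F" "F \<subseteq> Ob ` S" "S \<subseteq> \<Union>F" using o c by blast
  obtain S0 where "S0 \<subseteq> S" "finite S0" "F = Ob ` S0"
    using finite_subset_image[OF F(1) F(2)] by blast
  then show ?thesis using F(3) by blast
qed

lemma compact_Union_hyperspace:
  assumes "compactin (hyperspace X) \<K>"
  shows "compactin X (\<Union>\<K>)"
  unfolding compactin_def
proof (intro conjI allI impI)
  have sub: "\<K> \<subseteq> KS X" using compactin_subset_topspace[OF assms] topspace_hyperspace by metis
  then show "\<Union>\<K> \<subseteq> topspace X" unfolding KS_def by auto
  fix \<O> assume Ob: "(\<forall>x\<in>\<O>. openin X x) \<and> \<Union>\<K> \<subseteq> \<Union>\<O>"
  have "\<forall>K\<in>\<K>. \<exists>F. finite F \<and> F \<subseteq> \<O> \<and> K \<subseteq> \<Union>F"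
  proof
    fix K assume "K \<in> \<K>"
    then have "compactin X K" "K \<subseteq> \<Union>\<O>" using sub Ob unfolding KS_def by auto
    then have "\<forall>U. (\<forall>x\<in>U. openin X x) \<and> K \<subseteq> \<Union>U \<longrightarrow> (\<exists>F. finite F \<and> F \<subseteq> U \<and> K \<subseteq> \<Union>F)"
      by (simp add: compactin_def)
    then have "(\<forall>x\<in>\<O>. openin X x) \<and> K \<subseteq> \<Union>\<O> \<longrightarrow> (\<exists>F. finite F \<and> F \<subseteq> \<O> \<and> K \<subseteq> \<Union>F)"
      by (rule spec)
    then show "\<exists>F. finite F \<and> F \<subseteq> \<O> \<and> K \<subseteq> \<Union>F" using Ob \<open>K \<subseteq> \<Union>\<O>\<close> by blast
  qed
  then obtain f where f: "\<forall>K\<in>\<K>. finite (f K) \<and> f K \<subseteq> \<O> \<and> K \<subseteq> \<Union>(f K)"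
    by (rule bchoice[elim_format]) blast
  have opn: "openin (hyperspace X) (VT X (\<Union>(f K)) {}) \<and> K \<in> VT X (\<Union>(f K)) {}" if K: "K \<in> \<K>" for K
  proof
    have "f K \<subseteq> \<O>" using f K by blast
    have Oo: "\<forall>x\<in>\<O>. openin X x" using conjunct1[OF Ob] .
    have "openin X (\<Union>(f K))" by (rule openin_Union) (use Oo \<open>f K \<subseteq> \<O>\<close> in \<open>meson subsetD\<close>)
    then show "openin (hyperspace X) (VT X (\<Union>(f K)) {})" by (intro VT_open) auto
    have "K \<in> KS X" using sub K by blast
    moreover have "K \<subseteq> \<Union>(f K)" using f K by blast
    ultimately show "K \<in> VT X (\<Union>(f K)) {}" unfolding VT_def KS_def by simp
  qed
  obtain \<K>0 where K0: "finite \<K>0" "\<K>0 \<subseteq> \<K>" "\<K> \<subseteq> \<Union>((\<lambda>K. VT X (\<Union>(f K)) {}) ` \<K>0)"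
    using compact_subcover_fun[OF assms opn] by blast
  show "\<exists>F. finite F \<and> F \<subseteq> \<O> \<and> \<Union>\<K> \<subseteq> \<Union>F"
  proof (intro exI conjI)
    show "finite (\<Union>(f ` \<K>0))" using K0 f by (intro finite_Union finite_imageI) auto
    show "\<Union>(f ` \<K>0) \<subseteq> \<O>" using K0 f by blast
    have "\<exists>K\<in>\<K>0. L \<subseteq> \<Union>(f K)" if L: "L \<in> \<K>" for L
    proof -
      obtain K where "K \<in> \<K>0" "L \<in> VT X (\<Union>(f K)) {}" using K0(3) L by blast
      then show ?thesis unfolding VT_def by blast
    qed
    then show "\<Union>\<K> \<subseteq> \<Union>(\<Union>(f ` \<K>0))" by blast
  qed
qed

lemma regular_shrink:
  assumes "regular_space X" "compactin X K" "openin X U" "K \<subseteq> U"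
  shows "\<exists>V. openin X V \<and> K \<subseteq> V \<and> X closure_of V \<subseteq> U"
proof -
  have "closedin X (topspace X - U)" using assms(3) by blast
  moreover have "disjnt K (topspace X - U)" using assms(4) by (simp add: disjnt_iff subset_iff)
  ultimately obtain A B where AB: "openin X A" "openin X B" "K \<subseteq> A" "topspace X - U \<subseteq> B" "disjnt A B"
    using regular_space_compact_closed_separation[OF assms(1,2)] by metis
  have "A \<subseteq> topspace X - B" using AB openin_subset[OF AB(1)] by (auto simp: disjnt_iff)
  moreover have "closedin X (topspace X - B)" using AB(2) by blast
  ultimately have "X closure_of A \<subseteq> topspace X - B" by (rule closure_of_minimal)
  then have "X closure_of A \<subseteq> U" using AB(4) by blast
  then show ?thesis using AB by blast
qed

definition gd :: "'a topology \<Rightarrow> 'a set \<Rightarrow> 'a set set \<Rightarrow> 'a set \<Rightarrow> 'a set set \<Rightarrow> 'a set \<Rightarrow> 'a set set \<Rightarrow> bool" where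
  "gd X K G U \<U> V \<V> \<longleftrightarrow> openin X U \<and> finite \<U> \<and> (\<forall>u\<in>\<U>. openin X u) \<and>
     openin X V \<and> finite \<V> \<and> (\<forall>v\<in>\<V>. openin X v) \<and> K \<in> VT X V \<V> \<and> VT X U \<U> \<subseteq> G \<and>
     X closure_of V \<subseteq> U \<and> (\<forall>u\<in>\<U>. \<exists>v\<in>\<V>. X closure_of v \<subseteq> u)"

definition good :: "'a topology \<Rightarrow> 'a set set \<Rightarrow> bool" where
  "good X G \<longleftrightarrow> (\<forall>K\<in>G \<inter> KS X. \<exists>U \<U> V \<V>. gd X K G U \<U> V \<V>)"

lemma good_basis:
  assumes R: "regular_space X" and G: "G \<in> VB X"
  shows "good X G"
  unfolding good_def
proof
  fix K assume K: "K \<in> G \<inter> KS X"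
  obtain \<U> where U: "G = vietoris_basic X \<U>" "finite \<U>" "\<U> \<noteq> {}" "\<forall>U\<in>\<U>. openin X U"
    using G unfolding VB_def by blast
  have KU: "K \<subseteq> \<Union>\<U>" "\<forall>u\<in>\<U>. K \<inter> u \<noteq> {}" and Kc: "compactin X K"
    using K U(1) unfolding vietoris_basic_def by auto
  have oU: "openin X (\<Union>\<U>)" using U(4) by blast
  obtain V where V: "openin X V" "K \<subseteq> V" "X closure_of V \<subseteq> \<Union>\<U>"
    using regular_shrink[OF R Kc oU KU(1)] by blast
  have "\<forall>u\<in>\<U>. \<exists>v. openin X v \<and> K \<inter> v \<noteq> {} \<and> X closure_of v \<subseteq> u"
  proof
    fix u assume u: "u \<in> \<U>"
    then obtain x where x: "x \<in> K" "x \<in> u" using KU by blast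
    then have "x \<in> topspace X" using Kc compactin_subset_topspace by blast
    then have cx: "compactin X {x}" by simp
    have ou: "openin X u" using u U(4) by blast
    obtain v where "openin X v" "{x} \<subseteq> v" "X closure_of v \<subseteq> u"
      using regular_shrink[OF R cx ou] x(2) by blast
    then show "\<exists>v. openin X v \<and> K \<inter> v \<noteq> {} \<and> X closure_of v \<subseteq> u" using x by blast
  qed
  then obtain g where g: "\<And>u. u \<in> \<U> \<Longrightarrow> openin X (g u) \<and> K \<inter> g u \<noteq> {} \<and> X closure_of (g u) \<subseteq> u"
    by metis
  have "gd X K G (\<Union>\<U>) \<U> V (g ` \<U>)"
    unfolding gd_def
  proof (intro conjI)
    show "openin X (\<Union>\<U>)" by (rule oU)
    show "finite \<U>" by (rule U(2))
    show "\<forall>u\<in>\<U>. openin X u" by (rule U(4))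
    show "openin X V" by (rule V(1))
    show "finite (g ` \<U>)" using U(2) by simp
    show "\<forall>v\<in>g ` \<U>. openin X v" using g by blast
    show "K \<in> VT X V (g ` \<U>)" using K V(2) g unfolding VT_def KS_def by auto
    show "VT X (\<Union>\<U>) \<U> \<subseteq> G" unfolding U(1) VT_def vietoris_basic_def by (intro subsetI) simp
    show "X closure_of V \<subseteq> \<Union>\<U>" by (rule V(3))
    show "\<forall>u\<in>\<U>. \<exists>v\<in>g ` \<U>. X closure_of v \<subseteq> u" using g by blast
  qed
  then show "\<exists>U \<U>' V \<V>. gd X K G U \<U>' V \<V>" by blast
qed

lemma good_Int:
  assumes "good X A" "good X B"
  shows "good X (A \<inter> B)"
  unfolding good_def
proof
  fix K assume K: "K \<in> A \<inter> B \<inter> KS X"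
  then have KA: "K \<in> A \<inter> KS X" and KB: "K \<in> B \<inter> KS X" by auto
  obtain U1 \<U>1 V1 \<V>1 where "gd X K A U1 \<U>1 V1 \<V>1"
    using assms(1) KA unfolding good_def by blast
  then have 1: "openin X U1" "finite \<U>1" "\<forall>u\<in>\<U>1. openin X u"
     "openin X V1" "finite \<V>1" "\<forall>v\<in>\<V>1. openin X v" "K \<in> VT X V1 \<V>1" "VT X U1 \<U>1 \<subseteq> A"
     "X closure_of V1 \<subseteq> U1" "\<forall>u\<in>\<U>1. \<exists>v\<in>\<V>1. X closure_of v \<subseteq> u"
    unfolding gd_def by simp_all
  obtain U2 \<U>2 V2 \<V>2 where "gd X K B U2 \<U>2 V2 \<V>2"
    using assms(2) KB unfolding good_def by blast
  then have 2: "openin X U2" "finite \<U>2" "\<forall>u\<in>\<U>2. openin X u"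
     "openin X V2" "finite \<V>2" "\<forall>v\<in>\<V>2. openin X v" "K \<in> VT X V2 \<V>2" "VT X U2 \<U>2 \<subseteq> B"
     "X closure_of V2 \<subseteq> U2" "\<forall>u\<in>\<U>2. \<exists>v\<in>\<V>2. X closure_of v \<subseteq> u"
    unfolding gd_def by simp_all
  have "gd X K (A \<inter> B) (U1 \<inter> U2) (\<U>1 \<union> \<U>2) (V1 \<inter> V2) (\<V>1 \<union> \<V>2)"
    unfolding gd_def
  proof (intro conjI)
    show "openin X (U1 \<inter> U2)" using 1 2 by blast
    show "finite (\<U>1 \<union> \<U>2)" using 1 2 by blast
    show "\<forall>u\<in>\<U>1 \<union> \<U>2. openin X u" using 1 2 by blast
    show "openin X (V1 \<inter> V2)" using 1 2 by blast
    show "finite (\<V>1 \<union> \<V>2)" using 1 2 by blast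
    show "\<forall>v\<in>\<V>1 \<union> \<V>2. openin X v" using 1 2 by blast
    show "K \<in> VT X (V1 \<inter> V2) (\<V>1 \<union> \<V>2)" using 1(7) 2(7) unfolding VT_def by blast
    have "VT X (U1 \<inter> U2) (\<U>1 \<union> \<U>2) \<subseteq> VT X U1 \<U>1" "VT X (U1 \<inter> U2) (\<U>1 \<union> \<U>2) \<subseteq> VT X U2 \<U>2"
      unfolding VT_def by blast+
    then show "VT X (U1 \<inter> U2) (\<U>1 \<union> \<U>2) \<subseteq> A \<inter> B" using 1(8) 2(8) by blast
    have "X closure_of (V1 \<inter> V2) \<subseteq> X closure_of V1 \<inter> X closure_of V2"
      by (simp add: closure_of_mono)
    then show "X closure_of (V1 \<inter> V2) \<subseteq> U1 \<inter> U2" using 1(9) 2(9) by blast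
    show "\<forall>u\<in>\<U>1 \<union> \<U>2. \<exists>v\<in>\<V>1 \<union> \<V>2. X closure_of v \<subseteq> u" using 1(10) 2(10) by blast
  qed
  then show "\<exists>U \<U> V \<V>. gd X K (A \<inter> B) U \<U> V \<V>" by blast
qed

lemma gd_mono: "gd X K G U \<U> V \<V> \<Longrightarrow> G \<subseteq> G' \<Longrightarrow> gd X K G' U \<U> V \<V>"
  unfolding gd_def by blast

lemma good_generated:
  assumes R: "regular_space X" and G: "generate_topology_on (VB X) G"
  shows "good X G"
  using G
proof induct
  case Empty
  then show ?case unfolding good_def by blast
next
  case (Int a b)
  then show ?case using good_Int by blast
next
  case (UN K)
  show ?case unfolding good_def
  proof
    fix L assume "L \<in> \<Union>K \<inter> KS X"
    then obtain k where k: "k \<in> K" "L \<in> k \<inter> KS X" by blast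
    then have "good X k" using UN by blast
    then obtain U \<U> V \<V> where "gd X L k U \<U> V \<V>"
      using k unfolding good_def by blast
    then have "gd X L (\<Union>K) U \<U> V \<V>" using k(1) gd_mono by (metis Union_upper)
    then show "\<exists>U \<U> V \<V>. gd X L (\<Union>K) U \<U> V \<V>" by blast
  qed
next
  case (Basis s)
  then show ?case using good_basis R by blast
qed

lemma VT_closure_sub:
  assumes "X closure_of V \<subseteq> U" "\<forall>u\<in>\<U>. \<exists>v\<in>\<V>. X closure_of v \<subseteq> u"
  shows "VT X (X closure_of V) ((closure_of) X ` \<V>) \<subseteq> VT X U \<U>"
proof
  fix L assume L: "L \<in> VT X (X closure_of V) ((closure_of) X ` \<V>)"
  then have a: "L \<subseteq> topspace X \<and> compactin X L \<and> L \<noteq> {}" "L \<subseteq> X closure_of V"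
    "\<And>v. v \<in> \<V> \<Longrightarrow> L \<inter> X closure_of v \<noteq> {}"
    unfolding VT_def mem_Collect_eq by (blast, blast, blast)
  have "L \<inter> u \<noteq> {}" if u: "u \<in> \<U>" for u
  proof -
    obtain v where "v \<in> \<V>" "X closure_of v \<subseteq> u" using assms(2) u by blast
    then show ?thesis using a(3)[of v] by blast
  qed
  moreover have "L \<subseteq> U" using a(2) assms(1) by (rule order_trans)
  ultimately show "L \<in> VT X U \<U>" using a(1) unfolding VT_def mem_Collect_eq by blast
qed

lemma VT_sub_closure:
  assumes "openin X V" "\<forall>v\<in>\<V>. openin X v"
  shows "VT X V \<V> \<subseteq> VT X (X closure_of V) ((closure_of) X ` \<V>)"
proof
  fix L assume L: "L \<in> VT X V \<V>"
  have a: "L \<subseteq> topspace X \<and> compactin X L \<and> L \<noteq> {}" "L \<subseteq> V" "\<And>v. v \<in> \<V> \<Longrightarrow> L \<inter> v \<noteq> {}"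
    using L unfolding VT_def mem_Collect_eq by (blast, blast, blast)
  have "V \<subseteq> X closure_of V" by (rule closure_of_subset[OF openin_subset[OF assms(1)]])
  then have b: "L \<subseteq> X closure_of V" using a(2) by (rule order_trans[rotated])
  have c: "L \<inter> w \<noteq> {}" if w: "w \<in> (closure_of) X ` \<V>" for w
  proof -
    obtain v where v: "v \<in> \<V>" "w = X closure_of v" using w by blast
    have "openin X v" using assms(2) v(1) by (rule bspec)
    then have "v \<subseteq> X closure_of v" by (rule closure_of_subset[OF openin_subset])
    then show ?thesis using a(3)[OF v(1)] v(2) by blast
  qed
  show "L \<in> VT X (X closure_of V) ((closure_of) X ` \<V>)"
    unfolding VT_def mem_Collect_eq using a(1) b c by blast
qed

lemma regular_hyperspace:
  assumes R: "regular_space X"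
  shows "regular_space (hyperspace X)"
  unfolding neighbourhood_base_of_closedin[symmetric] neighbourhood_base_of
proof (intro allI impI)
  fix W K assume WK: "openin (hyperspace X) W \<and> K \<in> W"
  then obtain G where G: "generate_topology_on (VB X) G" "W = G \<inter> KS X"
    unfolding openin_hyperspace by blast
  have "good X G" using good_generated[OF R G(1)] .
  moreover have "K \<in> G \<inter> KS X" using WK G(2) by blast
  ultimately obtain U \<U> V \<V> where "gd X K G U \<U> V \<V>"
    unfolding good_def by blast
  then have d: "openin X U" "finite \<U>" "\<forall>u\<in>\<U>. openin X u"
     "openin X V" "finite \<V>" "\<forall>v\<in>\<V>. openin X v" "K \<in> VT X V \<V>" "VT X U \<U> \<subseteq> G"
     "X closure_of V \<subseteq> U" "\<forall>u\<in>\<U>. \<exists>v\<in>\<V>. X closure_of v \<subseteq> u"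
    unfolding gd_def by simp_all
  show "\<exists>A B. openin (hyperspace X) A \<and> closedin (hyperspace X) B \<and> K \<in> A \<and> A \<subseteq> B \<and> B \<subseteq> W"
  proof (intro exI conjI)
    show "openin (hyperspace X) (VT X V \<V>)" using d by (intro VT_open) auto
    show "closedin (hyperspace X) (VT X (X closure_of V) ((closure_of) X ` \<V>))"
      using d by (intro VT_closed) auto
    show "K \<in> VT X V \<V>" by (rule d(7))
    show "VT X V \<V> \<subseteq> VT X (X closure_of V) ((closure_of) X ` \<V>)"
      using d by (intro VT_sub_closure) auto
    show "VT X (X closure_of V) ((closure_of) X ` \<V>) \<subseteq> W"
    proof -
      have "VT X (X closure_of V) ((closure_of) X ` \<V>) \<subseteq> G" using VT_closure_sub[OF d(9) d(10)] d(8) by (rule order_trans)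
      moreover have "VT X (X closure_of V) ((closure_of) X ` \<V>) \<subseteq> KS X" by (rule VT_sub_KS)
      ultimately show ?thesis using G(2) by blast
    qed
  qed
qed

definition NF :: "'a topology \<Rightarrow> 'a set set \<Rightarrow> 'a set set" where
  "NF X F = VT X (\<Union>F) F"

lemma kn_get:
  assumes "k_network X \<P>" "compactin X K" "openin X U" "K \<subseteq> U"
  shows "\<exists>F. F \<subseteq> \<P> \<and> finite F \<and> K \<subseteq> \<Union>F \<and> \<Union>F \<subseteq> U"
  using assms unfolding k_network_def by blast

lemma cover_lemma:
  assumes kn: "k_network X \<P>" and cK: "compactin (hyperspace X) \<K>"
    and sK: "\<K> \<subseteq> VT X (X closure_of V) ((closure_of) X ` \<V>)"
    and VU: "X closure_of V \<subseteq> U" and oU: "openin X U" and fU: "finite \<U>"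
    and oUU: "\<forall>u\<in>\<U>. openin X u" and vu: "\<forall>u\<in>\<U>. \<exists>v\<in>\<V>. X closure_of v \<subseteq> u"
  shows "\<exists>\<N>. \<N> \<subseteq> NF X ` {F. finite F \<and> F \<subseteq> \<P>} \<and> finite \<N> \<and> \<K> \<subseteq> \<Union>\<N> \<and> \<Union>\<N> \<subseteq> VT X U \<U>"
proof -
  define M where "M = \<Union>\<K>"
  have cM: "compactin X M" unfolding M_def by (rule compact_Union_hyperspace[OF cK])
  have hL: "L \<subseteq> X closure_of V" "\<And>v. v \<in> \<V> \<Longrightarrow> L \<inter> X closure_of v \<noteq> {}" if "L \<in> \<K>" for L
    using sK that unfolding VT_def by auto
  have KS: "\<K> \<subseteq> KS X" using compactin_subset_topspace[OF cK] topspace_hyperspace by metis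
  have MU: "M \<subseteq> U" unfolding M_def using hL(1) VU by blast
  obtain F0 where F0: "F0 \<subseteq> \<P>" "finite F0" "M \<subseteq> \<Union>F0" "\<Union>F0 \<subseteq> U"
    using kn_get[OF kn cM oU MU] by (elim exE conjE) (rule that)
  have "\<forall>u\<in>\<U>. \<exists>F. finite F \<and> F \<subseteq> \<P> \<and> \<Union>F \<subseteq> u \<inter> U \<and> (\<forall>L\<in>\<K>. \<exists>P\<in>F. L \<inter> P \<noteq> {})"
  proof
    fix u assume u: "u \<in> \<U>"
    obtain v where v: "v \<in> \<V>" "X closure_of v \<subseteq> u" using vu u by blast
    define D where "D = X closure_of v \<inter> M"
    have cD: "compactin X D" unfolding D_def by (rule closed_Int_compactin[OF closedin_closure_of cM])
    have ou: "openin X (u \<inter> U)" using oUU u oU by (meson openin_Int)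
    have DU: "D \<subseteq> u \<inter> U" unfolding D_def using v(2) MU by blast
    obtain F where F: "F \<subseteq> \<P>" "finite F" "D \<subseteq> \<Union>F" "\<Union>F \<subseteq> u \<inter> U"
      using kn_get[OF kn cD ou DU] by (elim exE conjE) (rule that)
    have "\<exists>P\<in>F. L \<inter> P \<noteq> {}" if L: "L \<in> \<K>" for L
    proof -
      obtain x where "x \<in> L" "x \<in> X closure_of v" using hL(2)[OF L v(1)] by blast
      then have "x \<in> D" unfolding D_def M_def using L by blast
      then obtain P where "P \<in> F" "x \<in> P" using F(3) by blast
      then show ?thesis using \<open>x \<in> L\<close> by blast
    qed
    then show "\<exists>F. finite F \<and> F \<subseteq> \<P> \<and> \<Union>F \<subseteq> u \<inter> U \<and> (\<forall>L\<in>\<K>. \<exists>P\<in>F. L \<inter> P \<noteq> {})"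
      using F by blast
  qed
  from bchoice[OF this] obtain Fu where Fu: "\<forall>u\<in>\<U>. finite (Fu u) \<and> Fu u \<subseteq> \<P> \<and> \<Union>(Fu u) \<subseteq> u \<inter> U \<and> (\<forall>L\<in>\<K>. \<exists>P\<in>Fu u. L \<inter> P \<noteq> {})"
    ..
  define Gs where "Gs = F0 \<union> \<Union>(Fu ` \<U>)"
  have fGs: "finite Gs" unfolding Gs_def using F0(2) fU Fu by auto
  have GsP: "Gs \<subseteq> \<P>" unfolding Gs_def using F0(1) Fu by blast
  have GsU: "\<Union>Gs \<subseteq> U" unfolding Gs_def using F0(4) Fu by blast
  define sel where "sel L = {P \<in> Gs. P \<inter> L \<noteq> {}}" for L
  define \<N> where "\<N> = (\<lambda>L. NF X (sel L)) ` \<K>"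
  show ?thesis
  proof (intro exI conjI)
    show "\<N> \<subseteq> NF X ` {F. finite F \<and> F \<subseteq> \<P>}"
    proof
      fix N assume "N \<in> \<N>"
      then obtain L where "N = NF X (sel L)" unfolding \<N>_def by blast
      moreover have "finite (sel L)" unfolding sel_def using fGs by simp
      moreover have "sel L \<subseteq> \<P>" unfolding sel_def using GsP by blast
      ultimately show "N \<in> NF X ` {F. finite F \<and> F \<subseteq> \<P>}" by blast
    qed
    have "\<N> \<subseteq> NF X ` Pow Gs" unfolding \<N>_def sel_def by blast
    moreover have "finite (NF X ` Pow Gs)" using fGs by simp
    ultimately show "finite \<N>" by (rule finite_subset)
    show "\<K> \<subseteq> \<Union>\<N>"
    proof
      fix L assume L: "L \<in> \<K>"
      have "L \<subseteq> \<Union>(sel L)"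
      proof
        fix x assume "x \<in> L"
        then have "x \<in> M" unfolding M_def using L by blast
        then obtain P where "P \<in> F0" "x \<in> P" using F0(3) by blast
        then show "x \<in> \<Union>(sel L)" unfolding sel_def Gs_def using \<open>x \<in> L\<close> by blast
      qed
      moreover have "L \<in> KS X" using KS L by blast
      ultimately have "L \<in> NF X (sel L)" unfolding NF_def VT_def KS_def sel_def by auto
      then show "L \<in> \<Union>\<N>" unfolding \<N>_def using L by blast
    qed
    show "\<Union>\<N> \<subseteq> VT X U \<U>"
    proof
      fix K' assume "K' \<in> \<Union>\<N>"
      then obtain L where L: "L \<in> \<K>" "K' \<in> NF X (sel L)" unfolding \<N>_def by blast
      then have K': "K' \<in> KS X" "K' \<subseteq> \<Union>(sel L)" "\<And>P. P \<in> sel L \<Longrightarrow> K' \<inter> P \<noteq> {}"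
        unfolding NF_def VT_def KS_def by auto
      have "\<Union>(sel L) \<subseteq> \<Union>Gs" unfolding sel_def by (rule Union_mono) blast
      then have "\<Union>(sel L) \<subseteq> U" using GsU by (rule order_trans)
      then have "K' \<subseteq> U" using K'(2) by blast
      moreover have "K' \<inter> u \<noteq> {}" if u: "u \<in> \<U>" for u
      proof -
        have Fuu: "\<forall>L\<in>\<K>. \<exists>P\<in>Fu u. L \<inter> P \<noteq> {}" using Fu u by simp
        obtain P where P: "P \<in> Fu u" "L \<inter> P \<noteq> {}" using Fuu L(1) by blast
        have "P \<in> Gs" unfolding Gs_def using P(1) u by blast
        then have "P \<in> sel L" unfolding sel_def using P(2) by blast
        then have "K' \<inter> P \<noteq> {}" by (rule K'(3))
        moreover have "P \<subseteq> u" using Fu u P(1) by blast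
        ultimately show ?thesis by blast
      qed
      ultimately show "K' \<in> VT X U \<U>" using K'(1) unfolding VT_def KS_def by auto
    qed
  qed
qed

lemma local_net:
  assumes R: "regular_space X" and kn: "k_network X \<P>" and cK: "compactin (hyperspace X) \<K>"
    and gG: "good X G" and K: "K \<in> \<K>" and sub: "\<K> \<subseteq> G \<inter> KS X"
  shows "\<exists>Ob. openin (hyperspace X) Ob \<and> K \<in> Ob \<and> (\<exists>\<N>. \<N> \<subseteq> NF X ` {F. finite F \<and> F \<subseteq> \<P>} \<and>
           finite \<N> \<and> \<K> \<inter> Ob \<subseteq> \<Union>\<N> \<and> \<Union>\<N> \<subseteq> G \<inter> KS X)"
proof -
  have "K \<in> G \<inter> KS X" using K sub by blast
  then obtain U \<U> V \<V> where "gd X K G U \<U> V \<V>" using gG unfolding good_def by blast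
  then have d: "openin X U" "finite \<U>" "\<forall>u\<in>\<U>. openin X u"
     "openin X V" "finite \<V>" "\<forall>v\<in>\<V>. openin X v" "K \<in> VT X V \<V>" "VT X U \<U> \<subseteq> G"
     "X closure_of V \<subseteq> U" "\<forall>u\<in>\<U>. \<exists>v\<in>\<V>. X closure_of v \<subseteq> u"
    unfolding gd_def by simp_all
  define C where "C = VT X (X closure_of V) ((closure_of) X ` \<V>)"
  have cC: "closedin (hyperspace X) C" unfolding C_def using d by (intro VT_closed) auto
  have cK': "compactin (hyperspace X) (C \<inter> \<K>)" by (rule closed_Int_compactin[OF cC cK])
  have sK': "C \<inter> \<K> \<subseteq> VT X (X closure_of V) ((closure_of) X ` \<V>)" unfolding C_def by blast
  obtain \<N> where N: "\<N> \<subseteq> NF X ` {F. finite F \<and> F \<subseteq> \<P>}" "finite \<N>" "C \<inter> \<K> \<subseteq> \<Union>\<N>" "\<Union>\<N> \<subseteq> VT X U \<U>"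
    using cover_lemma[OF kn cK' sK' d(9) d(1) d(2) d(3) d(10)] by (elim exE conjE) (rule that)
  have "VT X V \<V> \<subseteq> C" unfolding C_def using d by (intro VT_sub_closure) auto
  then have "\<K> \<inter> VT X V \<V> \<subseteq> \<Union>\<N>" using N(3) by blast
  moreover have "\<Union>\<N> \<subseteq> G \<inter> KS X" using N(4) d(8) VT_sub_KS[of X U \<U>] by blast
  moreover have "openin (hyperspace X) (VT X V \<V>)" using d by (intro VT_open) auto
  ultimately show ?thesis using N(1,2) d(7) by (intro exI[of _ "VT X V \<V>"] conjI exI[of _ \<N>]) simp_all
qed

lemma hyper_network:
  assumes R: "regular_space X" and kn: "k_network X \<P>"
  shows "k_network (hyperspace X) (NF X ` {F. finite F \<and> F \<subseteq> \<P>})"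
  unfolding k_network_def
proof (intro conjI allI impI)
  show "\<forall>P\<in>NF X ` {F. finite F \<and> F \<subseteq> \<P>}. P \<subseteq> topspace (hyperspace X)"
    unfolding topspace_hyperspace NF_def using VT_sub_KS by blast
  fix \<K> \<W> assume a: "compactin (hyperspace X) \<K> \<and> openin (hyperspace X) \<W> \<and> \<K> \<subseteq> \<W>"
  then obtain G where G: "generate_topology_on (VB X) G" "\<W> = G \<inter> KS X"
    unfolding openin_hyperspace by blast
  have gG: "good X G" by (rule good_generated[OF R G(1)])
  have cK: "compactin (hyperspace X) \<K>" using a by blast
  have sub: "\<K> \<subseteq> G \<inter> KS X" using a G(2) by blast
  have "\<forall>K\<in>\<K>. \<exists>Ob. openin (hyperspace X) Ob \<and> K \<in> Ob \<and> (\<exists>\<N>. \<N> \<subseteq> NF X ` {F. finite F \<and> F \<subseteq> \<P>} \<and>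
           finite \<N> \<and> \<K> \<inter> Ob \<subseteq> \<Union>\<N> \<and> \<Union>\<N> \<subseteq> G \<inter> KS X)"
  proof
    fix K assume "K \<in> \<K>"
    then show "\<exists>Ob. openin (hyperspace X) Ob \<and> K \<in> Ob \<and> (\<exists>\<N>. \<N> \<subseteq> NF X ` {F. finite F \<and> F \<subseteq> \<P>} \<and>
           finite \<N> \<and> \<K> \<inter> Ob \<subseteq> \<Union>\<N> \<and> \<Union>\<N> \<subseteq> G \<inter> KS X)"
      by (rule local_net[OF R kn cK gG _ sub])
  qed
  from bchoice[OF this] obtain Ob where Ob: "\<forall>K\<in>\<K>. openin (hyperspace X) (Ob K) \<and> K \<in> Ob K \<and> (\<exists>\<N>. \<N> \<subseteq> NF X ` {F. finite F \<and> F \<subseteq> \<P>} \<and>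
           finite \<N> \<and> \<K> \<inter> Ob K \<subseteq> \<Union>\<N> \<and> \<Union>\<N> \<subseteq> G \<inter> KS X)"
    ..
  have "\<forall>K\<in>\<K>. \<exists>\<N>. \<N> \<subseteq> NF X ` {F. finite F \<and> F \<subseteq> \<P>} \<and>
           finite \<N> \<and> \<K> \<inter> Ob K \<subseteq> \<Union>\<N> \<and> \<Union>\<N> \<subseteq> G \<inter> KS X"
    using Ob by (meson)
  from bchoice[OF this] obtain N where N: "\<forall>K\<in>\<K>. N K \<subseteq> NF X ` {F. finite F \<and> F \<subseteq> \<P>} \<and>
           finite (N K) \<and> \<K> \<inter> Ob K \<subseteq> \<Union>(N K) \<and> \<Union>(N K) \<subseteq> G \<inter> KS X"
    ..
  have Ob2: "\<And>x. x \<in> \<K> \<Longrightarrow> openin (hyperspace X) (Ob x) \<and> x \<in> Ob x" using Ob by meson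
  obtain K0 where K0: "finite K0" "K0 \<subseteq> \<K>" "\<K> \<subseteq> \<Union>(Ob ` K0)"
    using compact_subcover_fun[OF cK Ob2] by blast
  show "\<exists>\<P>'. \<P>' \<subseteq> NF X ` {F. finite F \<and> F \<subseteq> \<P>} \<and> finite \<P>' \<and> \<K> \<subseteq> \<Union>\<P>' \<and> \<Union>\<P>' \<subseteq> \<W>"
  proof (intro exI conjI)
    show "\<Union>(N ` K0) \<subseteq> NF X ` {F. finite F \<and> F \<subseteq> \<P>}" using N K0(2) by blast
    show "finite (\<Union>(N ` K0))" using N K0 by (intro finite_Union finite_imageI) auto
    show "\<K> \<subseteq> \<Union>(\<Union>(N ` K0))"
    proof
      fix L assume "L \<in> \<K>"
      then obtain K where "K \<in> K0" "L \<in> Ob K" using K0(3) by blast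
      then have "L \<in> \<Union>(N K)" using N K0(2) \<open>L \<in> \<K>\<close> by blast
      then show "L \<in> \<Union>(\<Union>(N ` K0))" using \<open>K \<in> K0\<close> by blast
    qed
    show "\<Union>(\<Union>(N ` K0)) \<subseteq> \<W>" using N K0(2) G(2) by blast
  qed
qed

lemma hyper_cc:
  assumes cc: "compact_countable X \<P>"
  shows "compact_countable (hyperspace X) (NF X ` {F. finite F \<and> F \<subseteq> \<P>})"
  unfolding compact_countable_def
proof (intro allI impI)
  fix \<K> assume cK: "compactin (hyperspace X) \<K>"
  define M where "M = \<Union>\<K>"
  have "compactin X M" unfolding M_def by (rule compact_Union_hyperspace[OF cK])
  then have cC: "countable {P\<in>\<P>. P \<inter> M \<noteq> {}}" using cc unfolding compact_countable_def by blast
  have "{N \<in> NF X ` {F. finite F \<and> F \<subseteq> \<P>}. N \<inter> \<K> \<noteq> {}} \<subseteq> NF X ` {F. finite F \<and> F \<subseteq> {P\<in>\<P>. P \<inter> M \<noteq> {}}}"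
  proof
    fix N assume "N \<in> {N \<in> NF X ` {F. finite F \<and> F \<subseteq> \<P>}. N \<inter> \<K> \<noteq> {}}"
    then obtain F L where F: "finite F" "F \<subseteq> \<P>" "N = NF X F" "L \<in> N" "L \<in> \<K>" by blast
    have "\<And>P. P \<in> F \<Longrightarrow> L \<inter> P \<noteq> {}" using F(3,4) unfolding NF_def VT_def by blast
    then have "F \<subseteq> {P\<in>\<P>. P \<inter> M \<noteq> {}}" using F(2,5) unfolding M_def by blast
    then show "N \<in> NF X ` {F. finite F \<and> F \<subseteq> {P\<in>\<P>. P \<inter> M \<noteq> {}}}" using F(1,3) by blast
  qed
  moreover have "countable (NF X ` {F. finite F \<and> F \<subseteq> {P\<in>\<P>. P \<inter> M \<noteq> {}}})"
    by (intro countable_image countable_Collect_finite_subset cC)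
  ultimately show "countable {N \<in> NF X ` {F. finite F \<and> F \<subseteq> \<P>}. N \<inter> \<K> \<noteq> {}}"
    by (rule countable_subset)
qed

lemma hyper_closed:
  assumes "\<forall>P\<in>\<P>. closedin X P" "N \<in> NF X ` {F. finite F \<and> F \<subseteq> \<P>}"
  shows "closedin (hyperspace X) N"
proof -
  obtain F where F: "finite F" "F \<subseteq> \<P>" "N = NF X F" using assms(2) by blast
  have cl: "\<forall>c\<in>F. closedin X c" using F(2) assms(1) by blast
  have "closedin X (\<Union>F)" by (rule closedin_Union[OF F(1)]) (use cl in blast)
  then show ?thesis unfolding F(3) NF_def using F(1) cl by (intro VT_closed) auto
qed

lemma cont_sing: "continuous_map X (hyperspace X) (\<lambda>x. {x})"
  unfolding hyperspace_alt continuous_map_in_subtopology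
proof (intro conjI)
  show "(\<lambda>x. {x}) \<in> topspace X \<rightarrow> KS X" unfolding KS_def by auto
  show "continuous_map X (topology_generated_by (VB X)) (\<lambda>x. {x})"
  proof (rule continuous_on_generated_topo)
    fix W assume "W \<in> VB X"
    then obtain \<U> where U: "W = vietoris_basic X \<U>" "finite \<U>" "\<U> \<noteq> {}" "\<forall>U\<in>\<U>. openin X U"
      unfolding VB_def by blast
    have eq: "(\<lambda>x. {x}) -` W \<inter> topspace X = \<Inter>\<U> \<inter> topspace X"
      unfolding U(1) vietoris_basic_def using U(3) by auto
    have "openin X (\<Inter>\<U>)" using U(2,3,4) by (intro openin_Inter) auto
    then show "openin X ((\<lambda>x. {x}) -` W \<inter> topspace X)" unfolding eq by (intro openin_Int openin_topspace)
  next
    have "(\<lambda>x. {x}) ` topspace X \<subseteq> KS X" unfolding KS_def by auto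
    then show "(\<lambda>x. {x}) ` topspace X \<subseteq> \<Union>(VB X)" using KS_sub_VB by blast
  qed
qed

definition sg :: "'a topology \<Rightarrow> 'a set set \<Rightarrow> 'a set" where
  "sg X Q = {x \<in> topspace X. {x} \<in> Q}"

lemma back_network:
  assumes kn: "k_network (hyperspace X) \<Q>"
  shows "k_network X (sg X ` \<Q>)"
  unfolding k_network_def
proof (intro conjI allI impI)
  show "\<forall>P\<in>sg X ` \<Q>. P \<subseteq> topspace X" unfolding sg_def by blast
  fix K U assume a: "compactin X K \<and> openin X U \<and> K \<subseteq> U"
  define S where "S = (\<lambda>x. {x}) ` K"
  have cS: "compactin (hyperspace X) S" unfolding S_def using conjunct1[OF a] by (rule image_compactin[OF _ cont_sing])
  have oW: "openin (hyperspace X) (VT X U {})" using a by (intro VT_open) auto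
  have Kt: "K \<subseteq> topspace X" using a compactin_subset_topspace by blast
  have SW: "S \<subseteq> VT X U {}" unfolding S_def VT_def using a Kt by auto
  obtain \<Q>' where Q: "\<Q>' \<subseteq> \<Q>" "finite \<Q>'" "S \<subseteq> \<Union>\<Q>'" "\<Union>\<Q>' \<subseteq> VT X U {}"
    using kn_get[OF kn cS oW SW] by (elim exE conjE) (rule that)
  show "\<exists>\<P>'. \<P>' \<subseteq> sg X ` \<Q> \<and> finite \<P>' \<and> K \<subseteq> \<Union>\<P>' \<and> \<Union>\<P>' \<subseteq> U"
  proof (intro exI conjI)
    show "sg X ` \<Q>' \<subseteq> sg X ` \<Q>" using Q(1) by blast
    show "finite (sg X ` \<Q>')" using Q(2) by simp
    show "K \<subseteq> \<Union>(sg X ` \<Q>')"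
    proof
      fix x assume "x \<in> K"
      then have "{x} \<in> S" unfolding S_def by blast
      then obtain Q' where "Q' \<in> \<Q>'" "{x} \<in> Q'" using Q(3) by blast
      then show "x \<in> \<Union>(sg X ` \<Q>')" unfolding sg_def using Kt \<open>x \<in> K\<close> by blast
    qed
    show "\<Union>(sg X ` \<Q>') \<subseteq> U"
    proof
      fix x assume "x \<in> \<Union>(sg X ` \<Q>')"
      then obtain Q' where "Q' \<in> \<Q>'" "{x} \<in> Q'" unfolding sg_def by blast
      then have "{x} \<in> VT X U {}" using Q(4) by blast
      then show "x \<in> U" unfolding VT_def by blast
    qed
  qed
qed

lemma back_cc:
  assumes cc: "compact_countable (hyperspace X) \<Q>"
  shows "compact_countable X (sg X ` \<Q>)"
  unfolding compact_countable_def
proof (intro allI impI)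
  fix K assume cK: "compactin X K"
  define S where "S = (\<lambda>x. {x}) ` K"
  have cS: "compactin (hyperspace X) S" unfolding S_def by (rule image_compactin[OF cK cont_sing])
  then have c: "countable {Q\<in>\<Q>. Q \<inter> S \<noteq> {}}" using cc unfolding compact_countable_def by blast
  have "{P \<in> sg X ` \<Q>. P \<inter> K \<noteq> {}} \<subseteq> sg X ` {Q\<in>\<Q>. Q \<inter> S \<noteq> {}}"
  proof
    fix P assume "P \<in> {P \<in> sg X ` \<Q>. P \<inter> K \<noteq> {}}"
    then obtain Q x where "Q \<in> \<Q>" "P = sg X Q" "x \<in> P" "x \<in> K" by blast
    then have "{x} \<in> Q \<inter> S" unfolding sg_def S_def by blast
    then show "P \<in> sg X ` {Q\<in>\<Q>. Q \<inter> S \<noteq> {}}" using \<open>Q \<in> \<Q>\<close> \<open>P = sg X Q\<close> by blast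
  qed
  moreover have "countable (sg X ` {Q\<in>\<Q>. Q \<inter> S \<noteq> {}})" using c by (rule countable_image)
  ultimately show "countable {P \<in> sg X ` \<Q>. P \<inter> K \<noteq> {}}" by (rule countable_subset)
qed

lemma back_closed:
  assumes "closedin (hyperspace X) Q"
  shows "closedin X (sg X Q)"
  unfolding sg_def by (rule closedin_continuous_map_preimage[OF cont_sing assms])

theorem corollary3p5:
  fixes X :: "'a topology"
  assumes "regular_space X" and "Hausdorff_space X"
  shows "(aleph_k_space X \<longleftrightarrow> aleph_k_space (hyperspace X)) \<and>
         (closed_aleph_k_space X \<longleftrightarrow> closed_aleph_k_space (hyperspace X))"
proof (intro conjI iffI)
  have RH: "regular_space (hyperspace X)" by (rule regular_hyperspace[OF assms(1)])
  show "aleph_k_space (hyperspace X)" if A: "aleph_k_space X"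
  proof -
    obtain \<P> where "k_network X \<P>" "compact_countable X \<P>" using A unfolding aleph_k_space_def by blast
    then show ?thesis unfolding aleph_k_space_def
      using RH hyper_network[OF assms(1)] hyper_cc by blast
  qed
  show "aleph_k_space X" if A: "aleph_k_space (hyperspace X)"
  proof -
    obtain \<Q> where "k_network (hyperspace X) \<Q>" "compact_countable (hyperspace X) \<Q>"
      using A unfolding aleph_k_space_def by blast
    then show ?thesis unfolding aleph_k_space_def
      using assms(1) back_network back_cc by blast
  qed
  show "closed_aleph_k_space (hyperspace X)" if A: "closed_aleph_k_space X"
  proof -
    obtain \<P> where P: "k_network X \<P>" "compact_countable X \<P>" "\<forall>P\<in>\<P>. closedin X P"
      using A unfolding closed_aleph_k_space_def by blast
    have "\<forall>N\<in>NF X ` {F. finite F \<and> F \<subseteq> \<P>}. closedin (hyperspace X) N"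
      using hyper_closed[OF P(3)] by blast
    then show ?thesis unfolding closed_aleph_k_space_def
      using RH hyper_network[OF assms(1) P(1)] hyper_cc[OF P(2)] by blast
  qed
  show "closed_aleph_k_space X" if A: "closed_aleph_k_space (hyperspace X)"
  proof -
    obtain \<Q> where Q: "k_network (hyperspace X) \<Q>" "compact_countable (hyperspace X) \<Q>"
      "\<forall>Q\<in>\<Q>. closedin (hyperspace X) Q"
      using A unfolding closed_aleph_k_space_def by blast
    have "\<forall>P\<in>sg X ` \<Q>. closedin X P" using back_closed Q(3) by blast
    then show ?thesis unfolding closed_aleph_k_space_def
      using assms(1) back_network[OF Q(1)] back_cc[OF Q(2)] by blast
  qed
qed

end
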